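(* Let $S$ be a square-free semigroup with idempotent set $E$, $D$ a division ring, and let $(\alpha,\xi),(\beta,\zeta)\in Z^2(S,D^* )$ be normal 2-cocycles. Let $\gamma: D^{\beta}_{\zeta}S\to D^{\alpha}_{\xi}S$ be a ring isomorphism with $\gamma(E)=E$. Then there exist an automorphism $\phi$ of the semigroup $S$ and $(\mu,\eta)\in F^0(S,\mathrm{Aut}(D))\times F^1(S,D^* )$ such that $\gamma(ds)=\mu_e(d)\,\eta(s)\,\phi(s)$ for all $d\in D$ and all $s=e\cdot s\cdot f\in S^*$.
   Context: $D$ is a division ring, $D^*$ its group of units, $\mathrm{Aut}(D)$ its group of ring automorphisms, and for $d\in D^*$, $\rho_d(x)=dxd^{-1}$. A square-free semigroup is a semigroup $S$ (product $s\cdot t$) with zero $\theta$ together with a finite set $E\subseteq S$ of nonzero pairwise orthogonal idempotents such that $S=\bigcup_{e,f\in E}e\cdot S\cdot f$ and $|e\cdot S\cdot f\setminus\{\theta\}|\le 1$ for all $e,f\in E$. $S^*=S\setminus\{\theta\}$; each $s\in S^*$ satisfies $s=e\cdot s\cdot f$ for unique $e,f\in E$. Put $S^{<0>}=E$, $S^{<n>}=\{(s_1,\dots,s_n)\in S^n: s_1\cdots s_n\ne\theta\}$; $F^n(S,G)$ is the group of functions $S^{<n>}\to G$. Write $\alpha_s=\alpha(s)$, $\mu_e=\mu(e)$. A 2-cocycle is a pair $(\alpha,\xi)\in F^1(S,\mathrm{Aut}(D))\times F^2(S,D^* )$ with $\alpha_s(\xi(t,u))\xi(s,t\cdot u)=\xi(s,t)\xi(s\cdot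 t,u)$ for $(s,t,u)\in S^{<3>}$ and $\alpha_s\circ\alpha_t=\rho_{\xi(s,t)}\circ\alpha_{s\cdot t}$ for $(s,t)\in S^{<2>}$; $Z^2(S,D^* )$ is their set. It is normal if $\alpha_e=1_D$ and $\xi(e,e)=1$ for all $e\in E$. For $(\alpha,\xi)\in Z^2(S,D^* )$, $D^{\alpha}_{\xi}S$ is the ring which is the left $D$-vector space with basis $S^*$ and multiplication extended by distributivity from $(d_1s)(d_2t)=d_1\alpha_s(d_2)\xi(s,t)\,(s\cdot t)$ if $s\cdot t\ne\theta$ and $0$ otherwise; $E$ is regarded as a subset of this ring. *)

theory Defs
  imports Main
begin

definition square_free_semigroup ::
  "'s set \<Rightarrow> ('s \<Rightarrow> 's \<Rightarrow> 's) \<Rightarrow> 's \<Rightarrow> 's set \<Rightarrow> bool" where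
  "square_free_semigroup S m z E \<longleftrightarrow>
     (\<forall>x\<in>S. \<forall>y\<in>S. m x y \<in> S) \<and>
     (\<forall>x\<in>S. \<forall>y\<in>S. \<forall>w\<in>S. m (m x y) w = m x (m y w)) \<and>
     z \<in> S \<and> (\<forall>x\<in>S. m z x = z \<and> m x z = z) \<and>
     finite E \<and> E \<subseteq> S - {z} \<and>
     (\<forall>e\<in>E. m e e = e) \<and>
     (\<forall>e\<in>E. \<forall>f\<in>E. e \<noteq> f \<longrightarrow> m e f = z) \<and>
     S = (\<Union>e\<in>E. \<Union>f\<in>E. {m (m e s) f | s. s \<in> S}) \<and>
     (\<forall>e\<in>E. \<forall>f\<in>E. \<forall>x y.
        x \<in> {m (m e s) f | s. s \<in> S} - {z} \<longrightarrow>
        y \<in> {m (m e s) f | s. s \<in> S} - {z} \<longrightarrow> x = y)"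

definition left_idem :: "('s \<Rightarrow> 's \<Rightarrow> 's) \<Rightarrow> 's set \<Rightarrow> 's \<Rightarrow> 's" where
  "left_idem m E s = (THE e. e \<in> E \<and> (\<exists>f\<in>E. s = m (m e s) f))"

definition ring_aut :: "('d::division_ring \<Rightarrow> 'd) \<Rightarrow> bool" where
  "ring_aut f \<longleftrightarrow> bij f \<and> (\<forall>x y. f (x + y) = f x + f y) \<and> (\<forall>x y. f (x * y) = f x * f y)"

definition rho :: "'d::division_ring \<Rightarrow> 'd \<Rightarrow> 'd" where
  "rho d x = d * x * inverse d"

definition two_cocycle ::
  "'s set \<Rightarrow> ('s \<Rightarrow> 's \<Rightarrow> 's) \<Rightarrow> 's \<Rightarrow> ('s \<Rightarrow> 'd \<Rightarrow> 'd) \<Rightarrow> ('s \<Rightarrow> 's \<Rightarrow> 'd::division_ring) \<Rightarrow> bool" where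
  "two_cocycle S m z \<alpha> \<xi> \<longleftrightarrow>
     (\<forall>s\<in>S. s \<noteq> z \<longrightarrow> ring_aut (\<alpha> s)) \<and>
     (\<forall>s\<in>S. \<forall>t\<in>S. m s t \<noteq> z \<longrightarrow> \<xi> s t \<noteq> 0) \<and>
     (\<forall>s\<in>S. \<forall>t\<in>S. \<forall>u\<in>S. m (m s t) u \<noteq> z \<longrightarrow>
        \<alpha> s (\<xi> t u) * \<xi> s (m t u) = \<xi> s t * \<xi> (m s t) u) \<and>
     (\<forall>s\<in>S. \<forall>t\<in>S. m s t \<noteq> z \<longrightarrow> \<alpha> s \<circ> \<alpha> t = rho (\<xi> s t) \<circ> \<alpha> (m s t))"

definition normal_cocycle ::
  "'s set \<Rightarrow> ('s \<Rightarrow> 'd \<Rightarrow> 'd) \<Rightarrow> ('s \<Rightarrow> 's \<Rightarrow> 'd::division_ring) \<Rightarrow> bool" where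
  "normal_cocycle E \<alpha> \<xi> \<longleftrightarrow> (\<forall>e\<in>E. \<alpha> e = id \<and> \<xi> e e = 1)"

text \<open>The twisted semigroup ring D^alpha_xi S: elements are coefficient functions
S \<Rightarrow> D vanishing outside S^* (a left D-space with basis S^*), addition pointwise.\<close>
definition tw_carrier :: "'s set \<Rightarrow> 's \<Rightarrow> ('s \<Rightarrow> 'd::zero) set" where
  "tw_carrier S z = {x. \<forall>u. u \<notin> S - {z} \<longrightarrow> x u = 0}"

definition tw_mult ::
  "'s set \<Rightarrow> ('s \<Rightarrow> 's \<Rightarrow> 's) \<Rightarrow> 's \<Rightarrow> ('s \<Rightarrow> 'd \<Rightarrow> 'd) \<Rightarrow> ('s \<Rightarrow> 's \<Rightarrow> 'd::division_ring)
   \<Rightarrow> ('s \<Rightarrow> 'd) \<Rightarrow> ('s \<Rightarrow> 'd) \<Rightarrow> ('s \<Rightarrow> 'd)" where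
  "tw_mult S m z \<alpha> \<xi> x y = (\<lambda>u. if u \<in> S - {z} then
      (\<Sum>(s, t) \<in> {(s, t). s \<in> S - {z} \<and> t \<in> S - {z} \<and> m s t = u}. x s * \<alpha> s (y t) * \<xi> s t)
    else 0)"

definition basis_elt :: "'d::zero \<Rightarrow> 's \<Rightarrow> ('s \<Rightarrow> 'd)" where
  "basis_elt d s = (\<lambda>u. if u = s then d else 0)"

definition tw_ring_iso ::
  "'s set \<Rightarrow> ('s \<Rightarrow> 's \<Rightarrow> 's) \<Rightarrow> 's \<Rightarrow> ('s \<Rightarrow> 'd \<Rightarrow> 'd) \<Rightarrow> ('s \<Rightarrow> 's \<Rightarrow> 'd::division_ring)
   \<Rightarrow> ('s \<Rightarrow> 'd \<Rightarrow> 'd) \<Rightarrow> ('s \<Rightarrow> 's \<Rightarrow> 'd) \<Rightarrow> (('s \<Rightarrow> 'd) \<Rightarrow> ('s \<Rightarrow> 'd)) \<Rightarrow> bool" where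
  "tw_ring_iso S m z \<beta> \<zeta> \<alpha> \<xi> \<gamma> \<longleftrightarrow>
     bij_betw \<gamma> (tw_carrier S z) (tw_carrier S z) \<and>
     (\<forall>x\<in>tw_carrier S z. \<forall>y\<in>tw_carrier S z. \<gamma> (\<lambda>u. x u + y u) = (\<lambda>u. \<gamma> x u + \<gamma> y u)) \<and>
     (\<forall>x\<in>tw_carrier S z. \<forall>y\<in>tw_carrier S z.
        \<gamma> (tw_mult S m z \<beta> \<zeta> x y) = tw_mult S m z \<alpha> \<xi> (\<gamma> x) (\<gamma> y))"

definition semigroup_aut :: "'s set \<Rightarrow> ('s \<Rightarrow> 's \<Rightarrow> 's) \<Rightarrow> ('s \<Rightarrow> 's) \<Rightarrow> bool" where
  "semigroup_aut S m \<phi> \<longleftrightarrow> bij_betw \<phi> S S \<and> (\<forall>s\<in>S. \<forall>t\<in>S. \<phi> (m s t) = m (\<phi> s) (\<phi> t))"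

end

theory Submission imports Defs begin

lemma subsing_finite: "(\<And>x y. x \<in> A \<Longrightarrow> y \<in> A \<Longrightarrow> x = y) \<Longrightarrow> finite A"
proof (cases "A = {}")
  case False
  then obtain a where "a \<in> A" by blast
  assume "\<And>x y. x \<in> A \<Longrightarrow> y \<in> A \<Longrightarrow> x = y"
  then have "A \<subseteq> {a}" using \<open>a \<in> A\<close> by blast
  then show ?thesis using finite_subset by blast
qed simp

lemma ring_aut_0: "ring_aut f \<Longrightarrow> f 0 = (0::'d::division_ring)"
  unfolding ring_aut_def by (metis add_cancel_right_right)

lemma ring_aut_nz: "ring_aut f \<Longrightarrow> x \<noteq> 0 \<Longrightarrow> f x \<noteq> (0::'d::division_ring)"
  using ring_aut_0[of f] unfolding ring_aut_def bij_def inj_def by metis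

lemma ring_aut_1: "ring_aut f \<Longrightarrow> f 1 = (1::'d::division_ring)"
proof -
  assume a: "ring_aut f"
  have "f 1 * f 1 = f 1" using a unfolding ring_aut_def by (metis mult_1_left)
  moreover have "f 1 \<noteq> 0" using ring_aut_nz[OF a] by simp
  ultimately show ?thesis by (metis mult_cancel_right2)
qed

locale sfs =
  fixes S :: "'s set" and m :: "'s \<Rightarrow> 's \<Rightarrow> 's" and z :: 's and E :: "'s set"
  assumes sf: "square_free_semigroup S m z E"
begin

lemmas sfu = sf[unfolded square_free_semigroup_def]
lemmas c1 = sfu[THEN conjunct1]
lemmas c2 = sfu[THEN conjunct2, THEN conjunct1]
lemmas c3 = sfu[THEN conjunct2, THEN conjunct2, THEN conjunct1]
lemmas c4 = sfu[THEN conjunct2, THEN conjunct2, THEN conjunct2, THEN conjunct1]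
lemmas c5 = sfu[THEN conjunct2, THEN conjunct2, THEN conjunct2, THEN conjunct2, THEN conjunct1]
lemmas c6 = sfu[THEN conjunct2, THEN conjunct2, THEN conjunct2, THEN conjunct2, THEN conjunct2, THEN conjunct1]
lemmas c7 = sfu[THEN conjunct2, THEN conjunct2, THEN conjunct2, THEN conjunct2, THEN conjunct2, THEN conjunct2, THEN conjunct1]
lemmas c8 = sfu[THEN conjunct2, THEN conjunct2, THEN conjunct2, THEN conjunct2, THEN conjunct2, THEN conjunct2, THEN conjunct2, THEN conjunct1]
lemmas c9 = sfu[THEN conjunct2, THEN conjunct2, THEN conjunct2, THEN conjunct2, THEN conjunct2, THEN conjunct2, THEN conjunct2, THEN conjunct2, THEN conjunct1]
lemmas c10 = sfu[THEN conjunct2, THEN conjunct2, THEN conjunct2, THEN conjunct2, THEN conjunct2, THEN conjunct2, THEN conjunct2, THEN conjunct2, THEN conjunct2]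

lemma closed: "x \<in> S \<Longrightarrow> y \<in> S \<Longrightarrow> m x y \<in> S"
  using c1 by blast
lemma assoc: "x \<in> S \<Longrightarrow> y \<in> S \<Longrightarrow> w \<in> S \<Longrightarrow> m (m x y) w = m x (m y w)"
  using c2 by blast
lemma zS: "z \<in> S"
  using c3 by blast
lemma zl: "x \<in> S \<Longrightarrow> m z x = z"
  using c4 by blast
lemma zr: "x \<in> S \<Longrightarrow> m x z = z"
  using c4 by blast
lemma ES: "e \<in> E \<Longrightarrow> e \<in> S" and Enz: "e \<in> E \<Longrightarrow> e \<noteq> z"
  using c6 by blast+
lemma idem: "e \<in> E \<Longrightarrow> m e e = e"
  using c7 by blast
lemma orth: "e \<in> E \<Longrightarrow> f \<in> E \<Longrightarrow> e \<noteq> f \<Longrightarrow> m e f = z"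
  using c8 by blast
lemma cover: "s \<in> S \<Longrightarrow> \<exists>e\<in>E. \<exists>f\<in>E. \<exists>t\<in>S. s = m (m e t) f"
proof -
  assume "s \<in> S"
  have "S = (\<Union>e\<in>E. \<Union>f\<in>E. {m (m e s) f | s. s \<in> S})"
    using c9 .
  then show ?thesis using \<open>s \<in> S\<close> by blast
qed
lemma uniq: "e \<in> E \<Longrightarrow> f \<in> E \<Longrightarrow> s \<in> S \<Longrightarrow> t \<in> S \<Longrightarrow> m (m e s) f \<noteq> z \<Longrightarrow> m (m e t) f \<noteq> z
  \<Longrightarrow> m (m e s) f = m (m e t) f"
proof -
  assume a: "e \<in> E" "f \<in> E" "s \<in> S" "t \<in> S" "m (m e s) f \<noteq> z" "m (m e t) f \<noteq> z"
  have "\<forall>e\<in>E. \<forall>f\<in>E. \<forall>x y.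
        x \<in> {m (m e s) f | s. s \<in> S} - {z} \<longrightarrow>
        y \<in> {m (m e s) f | s. s \<in> S} - {z} \<longrightarrow> x = y"
    using c10 .
  then show ?thesis using a by blast
qed

lemma finite_S: "finite S"
proof -
  have S: "S = (\<Union>e\<in>E. \<Union>f\<in>E. {m (m e s) f | s. s \<in> S})"
    using c9 .
  have fE: "finite E" using c5 .
  have "finite {m (m e s) f | s. s \<in> S}" if "e \<in> E" "f \<in> E" for e f
  proof -
    have "finite ({m (m e s) f | s. s \<in> S} - {z})"
    proof (rule subsing_finite)
      fix x y assume xy: "x \<in> {m (m e s) f | s. s \<in> S} - {z}" "y \<in> {m (m e s) f | s. s \<in> S} - {z}"
      then obtain s t where st: "s \<in> S" "t \<in> S" "x = m (m e s) f" "y = m (m e t) f" by blast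
      show "x = y" using uniq[OF that st(1,2)] st xy by simp
    qed
    then show ?thesis by (metis finite_Diff2 finite.emptyI finite.insertI)
  qed
  then have "finite (\<Union>e\<in>E. \<Union>f\<in>E. {m (m e s) f | s. s \<in> S})" using fE by blast
  then show ?thesis using S by simp
qed

lemma left_abs: "e \<in> E \<Longrightarrow> t \<in> S \<Longrightarrow> m e t \<noteq> z \<Longrightarrow> m e t = t"
proof -
  assume a: "e \<in> E" "t \<in> S" "m e t \<noteq> z"
  obtain e' f' u where b: "e' \<in> E" "f' \<in> E" "u \<in> S" "t = m (m e' u) f'" using cover[OF a(2)] by blast
  have S: "e \<in> S" "e' \<in> S" "f' \<in> S" using a b ES by auto
  have "m e t = m (m (m e e') u) f'" using b S by (simp add: assoc closed)
  show ?thesis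
  proof (cases "e = e'")
    case True
    then show ?thesis using \<open>m e t = _\<close> b idem by simp
  next
    case False
    then show ?thesis using \<open>m e t = _\<close> orth a b S zl closed by simp
  qed
qed

lemma right_abs: "f \<in> E \<Longrightarrow> t \<in> S \<Longrightarrow> m t f \<noteq> z \<Longrightarrow> m t f = t"
proof -
  assume a: "f \<in> E" "t \<in> S" "m t f \<noteq> z"
  obtain e' f' u where b: "e' \<in> E" "f' \<in> E" "u \<in> S" "t = m (m e' u) f'" using cover[OF a(2)] by blast
  have S: "f \<in> S" "e' \<in> S" "f' \<in> S" using a b ES by auto
  have "m t f = m (m e' u) (m f' f)" using b S by (simp add: assoc closed)
  show ?thesis
  proof (cases "f = f'")
    case True
    then show ?thesis using \<open>m t f = _\<close> b idem by simp
  next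
    case False
    then show ?thesis using \<open>m t f = _\<close> orth a b S zr closed by simp
  qed
qed

lemma decomp: "s \<in> S \<Longrightarrow> s \<noteq> z \<Longrightarrow> \<exists>e\<in>E. \<exists>f\<in>E. m e s = s \<and> m s f = s"
proof -
  assume a: "s \<in> S" "s \<noteq> z"
  obtain e f u where b: "e \<in> E" "f \<in> E" "u \<in> S" "s = m (m e u) f" using cover[OF a(1)] by blast
  have S: "e \<in> S" "f \<in> S" using b ES by auto
  have "m e s = m e (m (m e u) f)" using b by simp
  also have "\<dots> = m (m e (m e u)) f" using b S closed assoc[of e "m e u" f] by simp
  also have "\<dots> = m (m (m e e) u) f" using b S closed assoc[of e e u] by simp
  also have "\<dots> = s" using b idem by simp
  finally have "m e s = s" .
  moreover have "m s f = s"
  proof -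
    have "m s f = m (m (m e u) f) f" using b by simp
    also have "\<dots> = m (m e u) (m f f)" using b S closed assoc[of "m e u" f f] by simp
    also have "\<dots> = s" using b idem by simp
    finally show ?thesis .
  qed
  ultimately show ?thesis using b by blast
qed

lemma left_idem_eq: "e \<in> E \<Longrightarrow> f \<in> E \<Longrightarrow> s \<in> S \<Longrightarrow> s \<noteq> z \<Longrightarrow> m e s = s \<Longrightarrow> m s f = s \<Longrightarrow> left_idem m E s = e"
  unfolding left_idem_def
proof (rule the_equality)
  assume a: "e \<in> E" "f \<in> E" "s \<in> S" "s \<noteq> z" "m e s = s" "m s f = s"
  have "s = m (m e s) f" using a by simp
  then show "e \<in> E \<and> (\<exists>f\<in>E. s = m (m e s) f)" using a(1,2) by blast
  fix e' assume b: "e' \<in> E \<and> (\<exists>f\<in>E. s = m (m e' s) f)"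
  then obtain f' where f': "f' \<in> E" "s = m (m e' s) f'" by blast
  have S: "e \<in> S" "e' \<in> S" "f' \<in> S" using a b f' ES by auto
  have "m e' s \<noteq> z"
  proof
    assume "m e' s = z"
    then have "s = m z f'" using f' by simp
    then show False using zl S a by simp
  qed
  then have "m e' s = s" using left_abs[of e' s] b a(3) by blast
  have "m (m e' e) s = s" using assoc[of e' e s] S a \<open>m e' s = s\<close> by simp
  show "e' = e"
  proof (rule ccontr)
    assume "e' \<noteq> e"
    then have "m e' e = z" using orth[of e' e] b a(1) by blast
    then show False using \<open>m (m e' e) s = s\<close> zl[OF a(3)] a(4) by simp
  qed
qed

lemma xi_subsing: "e \<in> E \<Longrightarrow> f \<in> E \<Longrightarrow> u \<in> S \<Longrightarrow> v \<in> S \<Longrightarrow> u \<noteq> z \<Longrightarrow> v \<noteq> z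
  \<Longrightarrow> m e u = u \<Longrightarrow> m u f = u \<Longrightarrow> m e v = v \<Longrightarrow> m v f = v \<Longrightarrow> u = v"
  using uniq[of e f u v] by simp

end
locale tw = sfs S m z E for S :: "'s set" and m z E +
  fixes \<alpha> :: "'s \<Rightarrow> 'd::division_ring \<Rightarrow> 'd" and \<xi> :: "'s \<Rightarrow> 's \<Rightarrow> 'd"
  assumes coc: "two_cocycle S m z \<alpha> \<xi>" and nor: "normal_cocycle E \<alpha> \<xi>"
begin

lemma aut: "s \<in> S \<Longrightarrow> s \<noteq> z \<Longrightarrow> ring_aut (\<alpha> s)"
  using coc unfolding two_cocycle_def by blast
lemma xi_nz: "s \<in> S \<Longrightarrow> t \<in> S \<Longrightarrow> m s t \<noteq> z \<Longrightarrow> \<xi> s t \<noteq> 0"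
  using coc unfolding two_cocycle_def by blast
lemma coc3: "s \<in> S \<Longrightarrow> t \<in> S \<Longrightarrow> u \<in> S \<Longrightarrow> m (m s t) u \<noteq> z \<Longrightarrow>
        \<alpha> s (\<xi> t u) * \<xi> s (m t u) = \<xi> s t * \<xi> (m s t) u"
  using coc unfolding two_cocycle_def by blast
lemma alpha_e: "e \<in> E \<Longrightarrow> \<alpha> e = id"
  using nor unfolding normal_cocycle_def by blast
lemma xi_ee: "e \<in> E \<Longrightarrow> \<xi> e e = 1"
  using nor unfolding normal_cocycle_def by blast

lemma xi_left1: "e \<in> E \<Longrightarrow> t \<in> S \<Longrightarrow> m e t = t \<Longrightarrow> t \<noteq> z \<Longrightarrow> \<xi> e t = 1"
proof -
  assume a: "e \<in> E" "t \<in> S" "m e t = t" "t \<noteq> z"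
  have "\<alpha> e (\<xi> e t) * \<xi> e (m e t) = \<xi> e e * \<xi> (m e e) t"
    using coc3[of e e t] a ES idem by simp
  then have "\<xi> e t * \<xi> e t = \<xi> e t" using a alpha_e xi_ee idem by simp
  moreover have "\<xi> e t \<noteq> 0" using xi_nz[of e t] a ES by simp
  ultimately show ?thesis by (metis mult_cancel_right2)
qed

lemma xi_right1: "f \<in> E \<Longrightarrow> t \<in> S \<Longrightarrow> m t f = t \<Longrightarrow> t \<noteq> z \<Longrightarrow> \<xi> t f = 1"
proof -
  assume a: "f \<in> E" "t \<in> S" "m t f = t" "t \<noteq> z"
  have "\<alpha> t (\<xi> f f) * \<xi> t (m f f) = \<xi> t f * \<xi> (m t f) f"
    using coc3[of t f f] a ES idem by simp
  then have "\<xi> t f * \<xi> t f = \<xi> t f" using a xi_ee idem ring_aut_1[OF aut[of t]] by simp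
  moreover have "\<xi> t f \<noteq> 0" using xi_nz[of t f] a ES by simp
  ultimately show ?thesis by (metis mult_cancel_right2)
qed

abbreviation "tm \<equiv> tw_mult S m z \<alpha> \<xi>"

lemma fin_pairs: "finite {(s, t). s \<in> S - {z} \<and> t \<in> S - {z} \<and> m s t = u}"
  by (rule finite_subset[of _ "S \<times> S"]) (auto simp: finite_S)

lemma tm_carrier: "tm x y \<in> tw_carrier S z"
  unfolding tw_mult_def tw_carrier_def by auto

lemma mult_basis: "s \<in> S \<Longrightarrow> s \<noteq> z \<Longrightarrow> t \<in> S \<Longrightarrow> t \<noteq> z \<Longrightarrow>
  tm (basis_elt a s) (basis_elt b t) =
    (if m s t \<noteq> z then basis_elt (a * \<alpha> s b * \<xi> s t) (m s t) else (\<lambda>u. 0))"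
proof (rule ext)
  fix u
  assume a: "s \<in> S" "s \<noteq> z" "t \<in> S" "t \<noteq> z"
  let ?P = "{(s, t). s \<in> S - {z} \<and> t \<in> S - {z} \<and> m s t = u}"
  have "(\<Sum>(s', t') \<in> ?P. basis_elt a s s' * \<alpha> s' (basis_elt b t t') * \<xi> s' t')
      = (\<Sum>p \<in> ?P. if p = (s, t) then a * \<alpha> s b * \<xi> s t else 0)"
  proof (rule sum.cong[OF refl])
    fix p assume "p \<in> ?P"
    then obtain s' t' where p: "p = (s', t')" "s' \<in> S" "s' \<noteq> z" by blast
    show "(case p of (s', t') \<Rightarrow> basis_elt a s s' * \<alpha> s' (basis_elt b t t') * \<xi> s' t')
      = (if p = (s, t) then a * \<alpha> s b * \<xi> s t else 0)"
      using p ring_aut_0[OF aut[of s']] by (auto simp: basis_elt_def)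
  qed
  also have "\<dots> = (if (s, t) \<in> ?P then a * \<alpha> s b * \<xi> s t else 0)"
    by (rule sum.delta[OF fin_pairs])
  finally show "tm (basis_elt a s) (basis_elt b t) u =
    (if m s t \<noteq> z then basis_elt (a * \<alpha> s b * \<xi> s t) (m s t) else (\<lambda>u. 0)) u"
    using a unfolding tw_mult_def by (auto simp: basis_elt_def closed)
qed

lemma mult_left: "e \<in> E \<Longrightarrow>
  tm (basis_elt 1 e) y = (\<lambda>u. if u \<in> S - {z} \<and> m e u = u then y u else 0)"
proof (rule ext)
  fix u
  assume e: "e \<in> E"
  show "tm (basis_elt 1 e) y u = (if u \<in> S - {z} \<and> m e u = u then y u else 0)"
  proof (cases "u \<in> S - {z}")
    case False
    then have nu: "(u \<in> S - {z}) = False" by blast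
    show ?thesis unfolding tw_mult_def by (simp only: nu if_False simp_thms)
  next
    case True
    let ?P = "{(s, t). s \<in> S - {z} \<and> t \<in> S - {z} \<and> m s t = u}"
    have "(\<Sum>(s', t') \<in> ?P. basis_elt 1 e s' * \<alpha> s' (y t') * \<xi> s' t')
        = (\<Sum>p \<in> ?P. if p = (e, u) then y u else 0)"
    proof (rule sum.cong[OF refl])
      fix p assume "p \<in> ?P"
      then obtain s' t' where p: "p = (s', t')" "s' \<in> S" "s' \<noteq> z" "t' \<in> S" "t' \<noteq> z" "m s' t' = u"
        by blast
      show "(case p of (s', t') \<Rightarrow> basis_elt 1 e s' * \<alpha> s' (y t') * \<xi> s' t')
        = (if p = (e, u) then y u else 0)"
      proof (cases "s' = e")
        case True
        have "m e t' = t'" using left_abs[of e t'] p True e True \<open>u \<in> S - {z}\<close> by auto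
        then have "t' = u" using p True by simp
        then show ?thesis using p True e alpha_e xi_left1[of e u] \<open>m e t' = t'\<close>
          by (auto simp: basis_elt_def)
      qed (use p in \<open>auto simp: basis_elt_def\<close>)
    qed
    also have "\<dots> = (if (e, u) \<in> ?P then y u else 0)"
      by (rule sum.delta[OF fin_pairs])
    finally show ?thesis using True e ES Enz unfolding tw_mult_def by auto
  qed
qed

lemma mult_right: "f \<in> E \<Longrightarrow>
  tm y (basis_elt 1 f) = (\<lambda>u. if u \<in> S - {z} \<and> m u f = u then y u else 0)"
proof (rule ext)
  fix u
  assume f: "f \<in> E"
  show "tm y (basis_elt 1 f) u = (if u \<in> S - {z} \<and> m u f = u then y u else 0)"
  proof (cases "u \<in> S - {z}")
    case False
    then have nu: "(u \<in> S - {z}) = False" by blast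
    show ?thesis unfolding tw_mult_def by (simp only: nu if_False simp_thms)
  next
    case True
    let ?P = "{(s, t). s \<in> S - {z} \<and> t \<in> S - {z} \<and> m s t = u}"
    have "(\<Sum>(s', t') \<in> ?P. y s' * \<alpha> s' (basis_elt 1 f t') * \<xi> s' t')
        = (\<Sum>p \<in> ?P. if p = (u, f) then y u else 0)"
    proof (rule sum.cong[OF refl])
      fix p assume "p \<in> ?P"
      then obtain s' t' where p: "p = (s', t')" "s' \<in> S" "s' \<noteq> z" "t' \<in> S" "t' \<noteq> z" "m s' t' = u"
        by blast
      show "(case p of (s', t') \<Rightarrow> y s' * \<alpha> s' (basis_elt 1 f t') * \<xi> s' t')
        = (if p = (u, f) then y u else 0)"
      proof (cases "t' = f")
        case True
        have "m s' f = s'" using right_abs[of f s'] p True f True \<open>u \<in> S - {z}\<close> by auto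
        then have "s' = u" using p True by simp
        then show ?thesis using p True f ring_aut_1[OF aut[of s']] xi_right1[of f u] \<open>m s' f = s'\<close>
          by (auto simp: basis_elt_def)
      next
        case False
        then show ?thesis using p ring_aut_0[OF aut[of s']] by (auto simp: basis_elt_def)
      qed
    qed
    also have "\<dots> = (if (u, f) \<in> ?P then y u else 0)"
      by (rule sum.delta[OF fin_pairs])
    finally show ?thesis using True f ES Enz unfolding tw_mult_def by auto
  qed
qed

end
theorem mainTheorem2:
  fixes S :: "'s set" and m :: "'s \<Rightarrow> 's \<Rightarrow> 's" and z :: 's and E :: "'s set"
    and \<alpha> \<beta> :: "'s \<Rightarrow> 'd::division_ring \<Rightarrow> 'd" and \<xi> \<zeta> :: "'s \<Rightarrow> 's \<Rightarrow> 'd"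
    and \<gamma> :: "('s \<Rightarrow> 'd) \<Rightarrow> ('s \<Rightarrow> 'd)"
  assumes "square_free_semigroup S m z E"
    and "two_cocycle S m z \<alpha> \<xi>" and "normal_cocycle E \<alpha> \<xi>"
    and "two_cocycle S m z \<beta> \<zeta>" and "normal_cocycle E \<beta> \<zeta>"
    and "tw_ring_iso S m z \<beta> \<zeta> \<alpha> \<xi> \<gamma>"
    and "(\<lambda>e. \<gamma> (basis_elt 1 e)) ` E = (\<lambda>e. basis_elt 1 e) ` E"
  shows "\<exists>\<phi> \<mu> \<eta>. semigroup_aut S m \<phi> \<and>
           (\<forall>e\<in>E. ring_aut (\<mu> e)) \<and> (\<forall>s\<in>S - {z}. \<eta> s \<noteq> (0::'d)) \<and>
           (\<forall>d::'d. \<forall>s\<in>S - {z}.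
              \<gamma> (basis_elt d s) = basis_elt (\<mu> (left_idem m E s) d * \<eta> s) (\<phi> s))"
proof -
  interpret A: tw S m z E \<alpha> \<xi>
    unfolding tw_def tw_axioms_def sfs_def using assms by blast
  interpret B: tw S m z E \<beta> \<zeta>
    unfolding tw_def tw_axioms_def sfs_def using assms by blast
  let ?R = "tw_carrier S z :: ('s \<Rightarrow> 'd) set"
  have g_bij: "bij_betw \<gamma> ?R ?R" using assms(6) unfolding tw_ring_iso_def by blast
  have g_add: "\<And>x y. x \<in> ?R \<Longrightarrow> y \<in> ?R \<Longrightarrow> \<gamma> (\<lambda>u. x u + y u) = (\<lambda>u. \<gamma> x u + \<gamma> y u)"
    using assms(6) unfolding tw_ring_iso_def by blast
  have g_mul: "\<And>x y. x \<in> ?R \<Longrightarrow> y \<in> ?R \<Longrightarrow> \<gamma> (B.tm x y) = A.tm (\<gamma> x) (\<gamma> y)"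
    using assms(6) unfolding tw_ring_iso_def by blast
  have bR: "\<And>s d. s \<in> S - {z} \<Longrightarrow> basis_elt d s \<in> ?R"
    unfolding tw_carrier_def basis_elt_def by auto
  have zR: "(\<lambda>u. 0) \<in> ?R" unfolding tw_carrier_def by auto
  have g0: "\<gamma> (\<lambda>u. 0) = (\<lambda>u. 0)"
  proof
    fix u
    have "\<gamma> (\<lambda>u. 0 + 0) = (\<lambda>u. \<gamma> (\<lambda>u. 0) u + \<gamma> (\<lambda>u. 0) u)" using g_add[OF zR zR] .
    then have "\<gamma> (\<lambda>u. 0) u = \<gamma> (\<lambda>u. 0) u + \<gamma> (\<lambda>u. 0) u" by (metis add_0)
    then show "\<gamma> (\<lambda>u. 0) u = 0" by simp
  qed
  have ginj: "\<And>x y. x \<in> ?R \<Longrightarrow> y \<in> ?R \<Longrightarrow> \<gamma> x = \<gamma> y \<Longrightarrow> x = y"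
    using bij_betw_imp_inj_on[OF g_bij] by (meson inj_onD)
  have gsurj: "\<And>y. y \<in> ?R \<Longrightarrow> \<exists>x\<in>?R. \<gamma> x = y"
  proof -
    fix y assume "y \<in> ?R"
    then have "y \<in> \<gamma> ` ?R" using bij_betw_imp_surj_on[OF g_bij] by simp
    then show "\<exists>x\<in>?R. \<gamma> x = y" by (rule imageE) blast
  qed
  have gnz: "\<And>s d. s \<in> S - {z} \<Longrightarrow> d \<noteq> 0 \<Longrightarrow> \<gamma> (basis_elt d s) \<noteq> (\<lambda>u. 0)"
  proof
    fix s and d :: 'd
    assume a: "s \<in> S - {z}" "d \<noteq> 0" "\<gamma> (basis_elt d s) = (\<lambda>u. 0)"
    then have "basis_elt d s = (\<lambda>u. 0)" using ginj[OF bR[OF a(1)] zR] g0 by simp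
    then show False using a(2) fun_cong[of _ _ s] unfolding basis_elt_def by fastforce
  qed
  have ES': "\<And>e. e \<in> E \<Longrightarrow> e \<in> S - {z}" using A.ES A.Enz by blast

  define \<phi> where "\<phi> s = (if s \<in> S - {z} then (SOME u. \<gamma> (basis_elt 1 s) u \<noteq> 0) else s)" for s
  define \<eta> where "\<eta> s = \<gamma> (basis_elt 1 s) (\<phi> s)" for s
  define \<mu> where "\<mu> e d = \<gamma> (basis_elt d e) (\<phi> e)" for e d

  have hE: "\<And>e. e \<in> E \<Longrightarrow> \<phi> e \<in> E \<and> \<gamma> (basis_elt 1 e) = basis_elt 1 (\<phi> e)"
  proof -
    fix e assume e: "e \<in> E"
    have "\<gamma> (basis_elt 1 e) \<in> (\<lambda>e. basis_elt 1 e) ` E" using assms(7) e by blast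
    then obtain e' where e': "e' \<in> E" "\<gamma> (basis_elt 1 e) = basis_elt 1 e'" by blast
    have "\<phi> e = e'" unfolding \<phi>_def using ES'[OF e] e'
      by (auto simp: basis_elt_def)
    then show "\<phi> e \<in> E \<and> \<gamma> (basis_elt 1 e) = basis_elt 1 (\<phi> e)" using e' by simp
  qed
  have li: "\<And>s. s \<in> S - {z} \<Longrightarrow> left_idem m E s \<in> E \<and> m (left_idem m E s) s = s"
  proof -
    fix s assume s: "s \<in> S - {z}"
    then obtain e f where "e \<in> E" "f \<in> E" "m e s = s" "m s f = s" using A.decomp by blast
    then show "left_idem m E s \<in> E \<and> m (left_idem m E s) s = s"
      using A.left_idem_eq[of e f s] s by auto
  qed
  have key: "\<And>s. s \<in> S - {z} \<Longrightarrow> \<phi> s \<in> S - {z} \<and> \<eta> s \<noteq> 0 \<and>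
      (\<forall>d. \<gamma> (basis_elt d s) = basis_elt (\<gamma> (basis_elt d s) (\<phi> s)) (\<phi> s)) \<and>
      m (\<phi> (left_idem m E s)) (\<phi> s) = \<phi> s"
  proof -
    fix s assume s: "s \<in> S - {z}"
    then obtain e f where ef: "e \<in> E" "f \<in> E" "m e s = s" "m s f = s" using A.decomp by blast
    have lie: "left_idem m E s = e" using A.left_idem_eq[of e f s] s ef by auto
    have he: "\<phi> e \<in> E" "\<gamma> (basis_elt 1 e) = basis_elt 1 (\<phi> e)" using hE ef by auto
    have hf: "\<phi> f \<in> E" "\<gamma> (basis_elt 1 f) = basis_elt 1 (\<phi> f)" using hE ef by auto
    have loc: "\<gamma> (basis_elt d s) = (\<lambda>u. if u \<in> S - {z} \<and> m u (\<phi> f) = u then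
        (if u \<in> S - {z} \<and> m (\<phi> e) u = u then \<gamma> (basis_elt d s) u else 0) else 0)" for d
    proof -
      have "B.tm (B.tm (basis_elt 1 e) (basis_elt d s)) (basis_elt 1 f) = basis_elt d s"
        unfolding B.mult_left[OF ef(1)] B.mult_right[OF ef(2)]
        using s ef by (auto simp: basis_elt_def)
      then have "\<gamma> (basis_elt d s) = \<gamma> (B.tm (B.tm (basis_elt 1 e) (basis_elt d s)) (basis_elt 1 f))"
        by simp
      also have "\<dots> = A.tm (\<gamma> (B.tm (basis_elt 1 e) (basis_elt d s))) (\<gamma> (basis_elt 1 f))"
        using g_mul B.tm_carrier bR ES' ef by blast
      also have "\<dots> = A.tm (A.tm (\<gamma> (basis_elt 1 e)) (\<gamma> (basis_elt d s))) (\<gamma> (basis_elt 1 f))"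
        using g_mul bR ES' ef s by metis
      also have "\<dots> = (\<lambda>u. if u \<in> S - {z} \<and> m u (\<phi> f) = u then
        (if u \<in> S - {z} \<and> m (\<phi> e) u = u then \<gamma> (basis_elt d s) u else 0) else 0)"
        unfolding he hf A.mult_left[OF he(1)] A.mult_right[OF hf(1)] by simp
      finally show ?thesis .
    qed
    have supp: "\<gamma> (basis_elt d s) u \<noteq> 0 \<Longrightarrow> u \<in> S - {z} \<and> m (\<phi> e) u = u \<and> m u (\<phi> f) = u" for d u
      using fun_cong[OF loc[of d], of u] by (auto split: if_splits)
    have ex: "\<exists>u. \<gamma> (basis_elt 1 s) u \<noteq> 0" using gnz[OF s, of 1] by auto
    have ps: "\<gamma> (basis_elt 1 s) (\<phi> s) \<noteq> 0" unfolding \<phi>_def using s someI_ex[OF ex] by simp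
    then have T: "\<phi> s \<in> S - {z}" "m (\<phi> e) (\<phi> s) = \<phi> s" "m (\<phi> s) (\<phi> f) = \<phi> s"
      using supp by blast+
    have "\<gamma> (basis_elt d s) = basis_elt (\<gamma> (basis_elt d s) (\<phi> s)) (\<phi> s)" for d
    proof
      fix u
      show "\<gamma> (basis_elt d s) u = basis_elt (\<gamma> (basis_elt d s) (\<phi> s)) (\<phi> s) u"
      proof (cases "u = \<phi> s")
        case False
        have "\<gamma> (basis_elt d s) u = 0"
        proof (rule ccontr)
          assume "\<gamma> (basis_elt d s) u \<noteq> 0"
          then have "u \<in> S - {z}" "m (\<phi> e) u = u" "m u (\<phi> f) = u" using supp by blast+
          then have "u = \<phi> s" using A.xi_subsing[of "\<phi> e" "\<phi> f" u "\<phi> s"] T he hf by blast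
          then show False using False by simp
        qed
        then show ?thesis using False by (simp add: basis_elt_def)
      qed (simp add: basis_elt_def)
    qed
    then show "\<phi> s \<in> S - {z} \<and> \<eta> s \<noteq> 0 \<and>
      (\<forall>d. \<gamma> (basis_elt d s) = basis_elt (\<gamma> (basis_elt d s) (\<phi> s)) (\<phi> s)) \<and>
      m (\<phi> (left_idem m E s)) (\<phi> s) = \<phi> s"
      using T ps lie unfolding \<eta>_def by blast
  qed
  have gbasis: "\<And>s d. s \<in> S - {z} \<Longrightarrow> \<gamma> (basis_elt d s) = basis_elt (\<gamma> (basis_elt d s) (\<phi> s)) (\<phi> s)"
    using key by blast
  have g1: "\<And>s. s \<in> S - {z} \<Longrightarrow> \<gamma> (basis_elt 1 s) = basis_elt (\<eta> s) (\<phi> s)"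
    using gbasis unfolding \<eta>_def by blast
  have me: "\<And>e d. e \<in> E \<Longrightarrow> \<gamma> (basis_elt d e) = basis_elt (\<mu> e d) (\<phi> e)"
    using gbasis ES' unfolding \<mu>_def by blast

  have mu_aut: "ring_aut (\<mu> e)" if e: "e \<in> E" for e
  proof -
    have pe: "\<phi> e \<in> E" using hE e by blast
    have add: "\<mu> e (d + d') = \<mu> e d + \<mu> e d'" for d d'
    proof -
      have "basis_elt (d + d') e = (\<lambda>u. basis_elt d e u + basis_elt d' e u)"
        by (auto simp: basis_elt_def)
      then have "\<gamma> (basis_elt (d + d') e) = (\<lambda>u. \<gamma> (basis_elt d e) u + \<gamma> (basis_elt d' e) u)"
        using g_add bR ES' e by metis
      then show ?thesis unfolding \<mu>_def by metis
    qed
    have mul: "\<mu> e (d * d') = \<mu> e d * \<mu> e d'" for d d'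
    proof -
      have "B.tm (basis_elt d e) (basis_elt d' e) = basis_elt (d * d') e"
        using B.mult_basis[of e e d d'] ES'[OF e] A.idem[OF e] B.alpha_e[OF e] B.xi_ee[OF e] by simp
      then have "\<gamma> (basis_elt (d * d') e) = A.tm (\<gamma> (basis_elt d e)) (\<gamma> (basis_elt d' e))"
        using g_mul bR ES' e by metis
      also have "\<dots> = basis_elt (\<mu> e d * \<mu> e d') (\<phi> e)"
        unfolding me[OF e]
        using A.mult_basis[of "\<phi> e" "\<phi> e" "\<mu> e d" "\<mu> e d'"] ES'[OF pe] A.idem[OF pe]
          A.alpha_e[OF pe] A.xi_ee[OF pe] by simp
      finally show ?thesis using me[OF e, of "d * d'"] by (metis basis_elt_def)
    qed
    have inj: "inj (\<mu> e)"
    proof (rule injI)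
      fix d d' assume "\<mu> e d = \<mu> e d'"
      then have "\<gamma> (basis_elt d e) = \<gamma> (basis_elt d' e)" using me[OF e] by simp
      then have "basis_elt d e = basis_elt d' e" using ginj bR ES' e by blast
      then show "d = d'" using fun_cong[of _ _ e] unfolding basis_elt_def by fastforce
    qed
    have surj: "surj (\<mu> e)"
    proof -
      { fix c
        obtain x where x: "x \<in> ?R" "\<gamma> x = basis_elt c (\<phi> e)" using gsurj bR ES' pe by blast
        let ?x = "B.tm (B.tm (basis_elt 1 e) x) (basis_elt 1 e)"
        have "\<gamma> ?x = A.tm (\<gamma> (B.tm (basis_elt 1 e) x)) (\<gamma> (basis_elt 1 e))"
          using g_mul B.tm_carrier bR ES' e by blast
        also have "\<dots> = A.tm (A.tm (\<gamma> (basis_elt 1 e)) (\<gamma> x)) (\<gamma> (basis_elt 1 e))"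
          using g_mul bR ES' e x by metis
        also have "\<dots> = basis_elt c (\<phi> e)"
          unfolding hE[OF e, THEN conjunct2] x A.mult_left[OF pe] A.mult_right[OF pe]
          using ES'[OF pe] A.idem[OF pe] by (auto simp: basis_elt_def)
        finally have "\<gamma> ?x = \<gamma> x" using x by simp
        then have xx: "?x = x" using ginj B.tm_carrier x by blast
        have "?x = basis_elt (x e) e"
          unfolding B.mult_left[OF e] B.mult_right[OF e]
        proof
          fix u
          show "(if u \<in> S - {z} \<and> m u e = u then if u \<in> S - {z} \<and> m e u = u then x u else 0 else 0)
              = basis_elt (x e) e u"
            using A.xi_subsing[of e e u e] e ES'[OF e] A.idem[OF e]
            by (auto simp: basis_elt_def)
        qed
        then have "\<mu> e (x e) = c" using me[OF e, of "x e"] xx x by (metis basis_elt_def)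
        then have "\<exists>d. \<mu> e d = c" by blast }
      then show ?thesis by (metis surj_def)
    qed
    show ?thesis unfolding ring_aut_def bij_def using add mul inj surj by blast
  qed

  have hmain: "\<And>s d. s \<in> S - {z} \<Longrightarrow>
      \<gamma> (basis_elt d s) = basis_elt (\<mu> (left_idem m E s) d * \<eta> s) (\<phi> s)"
  proof -
    fix s d assume s: "s \<in> S - {z}"
    define e where "e = left_idem m E s"
    have e: "e \<in> E" "m e s = s" using li[OF s] unfolding e_def by auto
    have pe: "\<phi> e \<in> E" using hE e by blast
    have ks: "\<phi> s \<in> S - {z}" "m (\<phi> e) (\<phi> s) = \<phi> s" using key[OF s] unfolding e_def by auto
    have "B.tm (basis_elt d e) (basis_elt 1 s) = basis_elt d s"
      using B.mult_basis[of e s d 1] ES'[OF e(1)] s e B.alpha_e[OF e(1)] B.xi_left1[of e s] by simp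
    then have "\<gamma> (basis_elt d s) = A.tm (\<gamma> (basis_elt d e)) (\<gamma> (basis_elt 1 s))"
      using g_mul bR ES' e s by metis
    also have "\<dots> = basis_elt (\<mu> e d * \<eta> s) (\<phi> s)"
      unfolding me[OF e(1)] g1[OF s]
      using A.mult_basis[of "\<phi> e" "\<phi> s" "\<mu> e d" "\<eta> s"] ES'[OF pe] ks
        A.alpha_e[OF pe] A.xi_left1[of "\<phi> e" "\<phi> s"] pe by simp
    finally show "\<gamma> (basis_elt d s) = basis_elt (\<mu> (left_idem m E s) d * \<eta> s) (\<phi> s)"
      unfolding e_def .
  qed

  have phiS: "\<And>s. s \<in> S \<Longrightarrow> \<phi> s \<in> S"
    using key by (metis DiffD1 DiffI \<phi>_def singletonD)
  have phiz: "\<phi> z = z" unfolding \<phi>_def by simp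
  have phinz: "\<And>s. s \<in> S - {z} \<Longrightarrow> \<phi> s \<noteq> z" using key by blast
  have hom: "\<phi> (m s t) = m (\<phi> s) (\<phi> t)" if st: "s \<in> S" "t \<in> S" for s t
  proof (cases "s = z \<or> t = z")
    case True
    then show ?thesis using A.zl A.zr phiz phiS st by auto
  next
    case False
    then have s: "s \<in> S - {z}" and t: "t \<in> S - {z}" using st by auto
    have lhs: "B.tm (basis_elt 1 s) (basis_elt 1 t) =
        (if m s t \<noteq> z then basis_elt (\<zeta> s t) (m s t) else (\<lambda>u. 0))"
      using B.mult_basis[of s t 1 1] s t ring_aut_1[OF B.aut[of s]] by simp
    define c where "c = \<eta> s * \<alpha> (\<phi> s) (\<eta> t) * \<xi> (\<phi> s) (\<phi> t)"
    have rhs: "\<gamma> (B.tm (basis_elt 1 s) (basis_elt 1 t)) =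
        (if m (\<phi> s) (\<phi> t) \<noteq> z then basis_elt c (m (\<phi> s) (\<phi> t)) else (\<lambda>u. 0))"
      unfolding c_def
      using g_mul[OF bR[OF s] bR[OF t]] g1[OF s] g1[OF t]
        A.mult_basis[of "\<phi> s" "\<phi> t" "\<eta> s" "\<eta> t"] key[OF s] key[OF t] by simp
    have cnz: "m (\<phi> s) (\<phi> t) \<noteq> z \<Longrightarrow> c \<noteq> 0"
      unfolding c_def using key[OF s] key[OF t] ring_aut_nz[OF A.aut[of "\<phi> s"]]
        A.xi_nz[of "\<phi> s" "\<phi> t"] by auto
    show ?thesis
    proof (cases "m s t = z")
      case True
      then have "(if m (\<phi> s) (\<phi> t) \<noteq> z then basis_elt c (m (\<phi> s) (\<phi> t)) else (\<lambda>u. 0)) = (\<lambda>u. 0)"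
        using lhs rhs g0 by simp
      then have "m (\<phi> s) (\<phi> t) = z"
      proof (rule contrapos_pp)
        assume nz: "m (\<phi> s) (\<phi> t) \<noteq> z"
        show "(if m (\<phi> s) (\<phi> t) \<noteq> z then basis_elt c (m (\<phi> s) (\<phi> t)) else (\<lambda>u. 0)) \<noteq> (\<lambda>u. 0)"
        proof
          assume "(if m (\<phi> s) (\<phi> t) \<noteq> z then basis_elt c (m (\<phi> s) (\<phi> t)) else (\<lambda>u. 0)) = (\<lambda>u. 0)"
          then have "basis_elt c (m (\<phi> s) (\<phi> t)) (m (\<phi> s) (\<phi> t)) = 0" using nz by simp
          then have "c = 0" by (simp add: basis_elt_def)
          then show False using cnz nz by blast
        qed
      qed
      then show ?thesis using True phiz by simp
    next
      case False
      have mst: "m s t \<in> S - {z}" using False A.closed st by auto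
      obtain e where e: "e = left_idem m E (m s t)" by blast
      have eE: "e \<in> E" using li[OF mst] e by simp
      define c1 where "c1 = \<mu> e (\<zeta> s t) * \<eta> (m s t)"
      have c1: "c1 \<noteq> 0" unfolding c1_def
        using ring_aut_nz[OF mu_aut[OF eE]] B.xi_nz[of s t] False st key[OF mst] by auto
      have eq: "basis_elt c1 (\<phi> (m s t)) =
          (if m (\<phi> s) (\<phi> t) \<noteq> z then basis_elt c (m (\<phi> s) (\<phi> t)) else (\<lambda>u. 0))"
        using rhs lhs False hmain[OF mst, of "\<zeta> s t"] e unfolding c1_def by simp
      show ?thesis
        using fun_cong[OF eq, of "\<phi> (m s t)"] c1 unfolding basis_elt_def
        by (auto split: if_splits)
    qed
  qed
  have inj: "inj_on \<phi> S"
  proof (rule inj_onI)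
    fix s t assume st: "s \<in> S" "t \<in> S" "\<phi> s = \<phi> t"
    show "s = t"
    proof (cases "s = z \<or> t = z")
      case True
      then show ?thesis using st phiz phinz by (metis DiffI singletonD)
    next
      case False
      then have s: "s \<in> S - {z}" and t: "t \<in> S - {z}" using st by auto
      define e where "e = left_idem m E s"
      have eE: "e \<in> E" using li[OF s] e_def by simp
      obtain d where d: "\<mu> e d = \<eta> t * inverse (\<eta> s)"
        using mu_aut[OF eE] unfolding ring_aut_def bij_def surj_def by metis
      have "\<gamma> (basis_elt d s) = basis_elt (\<eta> t) (\<phi> t)"
        using hmain[OF s, of d] d key[OF s] st(3) unfolding e_def by (simp add: mult.assoc)
      also have "\<dots> = \<gamma> (basis_elt 1 t)" using g1[OF t] by simp
      finally have "basis_elt d s = basis_elt 1 t" using ginj bR s t by blast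
      then show ?thesis using fun_cong[of _ _ t] unfolding basis_elt_def by (metis one_neq_zero)
    qed
  qed
  have "\<phi> ` S = S" using endo_inj_surj[OF A.finite_S _ inj] phiS by blast
  then have "semigroup_aut S m \<phi>"
    unfolding semigroup_aut_def bij_betw_def using inj hom by blast
  then show ?thesis using mu_aut key hmain by blast
qed

end
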